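(* If a Möbius transformation of $\mathcal A_2^{(0,1)}\cup\{\infty\}$ fixes each of $-1,1,-e_1,e_1,0$ and $\infty$, then it is the identity transformation, i.e. its Vahlen matrices are $\pm I$.
   Context: $\mathcal A_2$ is the real associative algebra generated by $e_1,e_2$ with $e_1^2=e_2^2=-1$, $e_1e_2=-e_2e_1$; for $a=a_0+a_1e_1+a_2e_2+a_{12}e_1e_2$ put $a^*=a_0+a_1e_1+a_2e_2-a_{12}e_1e_2$. $\mathcal A_2^{(0,1)}=\mathbb R+\mathbb Re_1+\mathbb Re_2$. A Vahlen matrix is $\begin{pmatrix}a&b\\c&d\end{pmatrix}$ with $a,b,c,d\in\mathcal A_2$, $ad^*-bc^*=1$, $ab^*,cd^*\in\mathcal A_2^{(0,1)}$, acting by $x\mapsto(ax+b)(cx+d)^{-1}$, $\infty\mapsto ac^{-1}$; the Möbius transformations of $\mathcal A_2^{(0,1)}\cup\{\infty\}$ are exactly these maps, each given by exactly two Vahlen matrices $\pm A$. *)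

theory Defs
  imports Complex_Main
begin

text \<open>The Clifford algebra A_2: elements a0 + a1 e1 + a2 e2 + a12 e1e2,
  with e1^2 = e2^2 = -1 and e1 e2 = - e2 e1.\<close>

datatype A2 = A2 (cp0: real) (cp1: real) (cp2: real) (cp12: real)

definition a2_zero :: A2 where "a2_zero = A2 0 0 0 0"
definition a2_one :: A2 where "a2_one = A2 1 0 0 0"
definition a2_e1 :: A2 where "a2_e1 = A2 0 1 0 0"
definition a2_e2 :: A2 where "a2_e2 = A2 0 0 1 0"

definition a2_add :: "A2 \<Rightarrow> A2 \<Rightarrow> A2" where
  "a2_add a b = A2 (cp0 a + cp0 b) (cp1 a + cp1 b) (cp2 a + cp2 b) (cp12 a + cp12 b)"

definition a2_neg :: "A2 \<Rightarrow> A2" where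
  "a2_neg a = A2 (- cp0 a) (- cp1 a) (- cp2 a) (- cp12 a)"

definition a2_sub :: "A2 \<Rightarrow> A2 \<Rightarrow> A2" where
  "a2_sub a b = a2_add a (a2_neg b)"

text \<open>Product, determined by bilinearity and e1 e1 = e2 e2 = -1, e1 e2 = e12 = - e2 e1
  (hence e1 e12 = -e2, e12 e1 = e2, e2 e12 = e1, e12 e2 = -e1, e12 e12 = -1).\<close>
definition a2_mult :: "A2 \<Rightarrow> A2 \<Rightarrow> A2" where
  "a2_mult a b = A2
     (cp0 a * cp0 b - cp1 a * cp1 b - cp2 a * cp2 b - cp12 a * cp12 b)
     (cp0 a * cp1 b + cp1 a * cp0 b + cp2 a * cp12 b - cp12 a * cp2 b)
     (cp0 a * cp2 b - cp1 a * cp12 b + cp2 a * cp0 b + cp12 a * cp1 b)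
     (cp0 a * cp12 b + cp1 a * cp2 b - cp2 a * cp1 b + cp12 a * cp0 b)"

definition a2_star :: "A2 \<Rightarrow> A2" where
  "a2_star a = A2 (cp0 a) (cp1 a) (cp2 a) (- cp12 a)"

definition a2_inv :: "A2 \<Rightarrow> A2" where
  "a2_inv a = (let n = (cp0 a)\<^sup>2 + (cp1 a)\<^sup>2 + (cp2 a)\<^sup>2 + (cp12 a)\<^sup>2 in
     A2 (cp0 a / n) (- cp1 a / n) (- cp2 a / n) (- cp12 a / n))"

definition paravec :: "A2 \<Rightarrow> bool" where
  "paravec a \<longleftrightarrow> cp12 a = 0"

definition vahlen :: "A2 \<Rightarrow> A2 \<Rightarrow> A2 \<Rightarrow> A2 \<Rightarrow> bool" where
  "vahlen a b c d \<longleftrightarrow>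
     a2_sub (a2_mult a (a2_star d)) (a2_mult b (a2_star c)) = a2_one \<and>
     paravec (a2_mult a (a2_star b)) \<and> paravec (a2_mult c (a2_star d))"

datatype ext = Fin A2 | Infty

fun moebius :: "A2 \<Rightarrow> A2 \<Rightarrow> A2 \<Rightarrow> A2 \<Rightarrow> ext \<Rightarrow> ext" where
  "moebius a b c d (Fin x) =
     (let den = a2_add (a2_mult c x) d in
      if den = a2_zero then Infty
      else Fin (a2_mult (a2_add (a2_mult a x) b) (a2_inv den)))"
| "moebius a b c d Infty =
     (if c = a2_zero then Infty else Fin (a2_mult a (a2_inv c)))"

end

theory Submission
  imports Defs
begin

lemma A2_eta: "x = A2 (cp0 x) (cp1 x) (cp2 x) (cp12 x)" by (cases x) simp

lemma mult_assoc2: "a2_mult (a2_mult x y) z = a2_mult x (a2_mult y z)"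
  by (simp add: a2_mult_def algebra_simps)

lemma nz_norm: "x \<noteq> a2_zero \<Longrightarrow> (cp0 x)\<^sup>2 + (cp1 x)\<^sup>2 + (cp2 x)\<^sup>2 + (cp12 x)\<^sup>2 \<noteq> 0"
  by (cases x) (auto simp: a2_zero_def add_nonneg_eq_0_iff)

lemma inv_l: "x \<noteq> a2_zero \<Longrightarrow> a2_mult (a2_inv x) x = a2_one"
proof -
  assume "x \<noteq> a2_zero"
  then have n: "(cp0 x)\<^sup>2 + (cp1 x)\<^sup>2 + (cp2 x)\<^sup>2 + (cp12 x)\<^sup>2 \<noteq> 0" by (rule nz_norm)
  obtain p q r s where x: "x = A2 p q r s" by (cases x)
  have n': "p*p+q*q+r*r+s*s \<noteq> 0" using n by (simp add: x power2_eq_square)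
  show ?thesis using n' by (simp add: x a2_mult_def a2_inv_def a2_one_def Let_def power2_eq_square divide_simps) (simp add: algebra_simps)?
qed

lemma inv_r: "x \<noteq> a2_zero \<Longrightarrow> a2_mult x (a2_inv x) = a2_one"
proof -
  assume "x \<noteq> a2_zero"
  then have n: "(cp0 x)\<^sup>2 + (cp1 x)\<^sup>2 + (cp2 x)\<^sup>2 + (cp12 x)\<^sup>2 \<noteq> 0" by (rule nz_norm)
  obtain p q r s where x: "x = A2 p q r s" by (cases x)
  have n': "p*p+q*q+r*r+s*s \<noteq> 0" using n by (simp add: x power2_eq_square)
  show ?thesis using n' by (simp add: x a2_mult_def a2_inv_def a2_one_def Let_def power2_eq_square divide_simps) (simp add: algebra_simps)?
qed

lemma mult_one_r: "a2_mult x a2_one = x" by (cases x) (simp add: a2_mult_def a2_one_def)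
lemma mult_one_l: "a2_mult a2_one x = x" by (cases x) (simp add: a2_mult_def a2_one_def)
lemma mult_zero_l: "a2_mult a2_zero x = a2_zero" by (simp add: a2_mult_def a2_zero_def)
lemma mult_zero_r: "a2_mult x a2_zero = a2_zero" by (simp add: a2_mult_def a2_zero_def)
lemma add_zero_l: "a2_add a2_zero x = x" by (cases x) (simp add: a2_add_def a2_zero_def)
lemma add_zero_r: "a2_add x a2_zero = x" by (cases x) (simp add: a2_add_def a2_zero_def)

lemma cancel_r: "d \<noteq> a2_zero \<Longrightarrow> a2_mult x (a2_inv d) = y \<Longrightarrow> x = a2_mult y d"
proof -
  assume d: "d \<noteq> a2_zero" and h: "a2_mult x (a2_inv d) = y"
  have "x = a2_mult x (a2_mult (a2_inv d) d)" using inv_l[OF d] by (simp add: mult_one_r)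
  also have "\<dots> = a2_mult y d" using h by (simp add: mult_assoc2[symmetric])
  finally show ?thesis .
qed

theorem proposition3p5:
  fixes a b c d :: A2
  assumes "vahlen a b c d"
    and "moebius a b c d (Fin (a2_neg a2_one)) = Fin (a2_neg a2_one)"
    and "moebius a b c d (Fin a2_one) = Fin a2_one"
    and "moebius a b c d (Fin (a2_neg a2_e1)) = Fin (a2_neg a2_e1)"
    and "moebius a b c d (Fin a2_e1) = Fin a2_e1"
    and "moebius a b c d (Fin a2_zero) = Fin a2_zero"
    and "moebius a b c d Infty = Infty"
  shows "(\<forall>x. paravec x \<longrightarrow> moebius a b c d (Fin x) = Fin x)
    \<and> ((a, b, c, d) = (a2_one, a2_zero, a2_zero, a2_one)
       \<or> (a, b, c, d) = (a2_neg a2_one, a2_zero, a2_zero, a2_neg a2_one))"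
proof -
  have c: "c = a2_zero" using assms(7) by (auto split: if_splits)
  have den: "\<And>x. a2_add (a2_mult c x) d = d" by (simp add: c mult_zero_l add_zero_l)
  have d: "d \<noteq> a2_zero" and b0: "a2_mult b (a2_inv d) = a2_zero"
    using assms(6) by (auto simp: den mult_zero_r add_zero_l Let_def split: if_splits)
  have b: "b = a2_zero" using cancel_r[OF d b0] by (simp add: mult_zero_l)
  have "a2_mult a (a2_inv d) = a2_one"
    using assms(3) by (auto simp: c mult_zero_l add_zero_l b add_zero_r Let_def mult_one_r split: if_splits)
  hence ad: "a = d" using cancel_r[OF d, of a a2_one] by (simp add: mult_one_l)
  have "a2_mult (a2_mult a a2_e1) (a2_inv d) = a2_e1"
    using assms(5) by (auto simp: c mult_zero_l add_zero_l b add_zero_r Let_def split: if_splits)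
  hence "a2_mult a a2_e1 = a2_mult a2_e1 a" using cancel_r[OF d, of "a2_mult a a2_e1" a2_e1] ad by simp
  hence a23: "cp2 a = 0" "cp12 a = 0"
    by (cases a; simp add: a2_mult_def a2_e1_def)+
  obtain p q where ap: "a = A2 p q 0 0" using a23 by (cases a) auto
  have v: "a2_sub (a2_mult a (a2_star d)) (a2_mult b (a2_star c)) = a2_one"
    using assms(1) by (simp add: vahlen_def)
  have "a2_mult b (a2_star c) = a2_zero" by (simp add: b mult_zero_l)
  hence "a2_mult a (a2_star a) = a2_one" using v ad
    by (cases "a2_mult a (a2_star a)") (simp add: a2_sub_def a2_neg_def a2_zero_def a2_add_def)
  hence e1: "p * p - q * q = 1" and e2: "p * q + q * p = 0"
    by (simp_all add: ap a2_mult_def a2_star_def a2_one_def)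
  have "q = 0"
  proof (rule ccontr)
    assume "q \<noteq> 0"
    have "2 * (p * q) = 0" using e2 by (simp add: mult.commute)
    hence "p = 0" using \<open>q \<noteq> 0\<close> by simp
    hence "q * q = -1" using e1 by simp
    thus False using zero_le_square[of q] by linarith
  qed
  hence "p = 1 \<or> p = -1" using e1 by (simp add: square_eq_1_iff)
  hence A: "a = a2_one \<or> a = a2_neg a2_one"
    using ap \<open>q = 0\<close> by (auto simp: a2_one_def a2_neg_def)
  have id: "moebius a b c d (Fin x) = Fin x" for x
  proof -
    have "moebius a b c d (Fin x) = Fin (a2_mult (a2_mult a x) (a2_inv a))"
      using d ad by (simp add: c mult_zero_l add_zero_l b add_zero_r Let_def)
    also have "\<dots> = Fin x" using A
      by (cases x) (auto simp: a2_mult_def a2_inv_def a2_one_def a2_neg_def Let_def)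
    finally show ?thesis .
  qed
  show ?thesis
    using A ad b c id by auto
qed

end
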